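(* Let $P$ be a pre-meadow with $\mathbf{a}$. The following are equivalent: (1) for all $0\cdot z,0\cdot w\in 0\cdot P$ with $0\cdot z\le 0\cdot w$, the transition map $f_{0\cdot w,0\cdot z}:P_{0\cdot w}\to P_{0\cdot z}$ is surjective; (2) for all $0\cdot z\in 0\cdot P$, the transition map $f_{0,0\cdot z}:P_0\to P_{0\cdot z}$ is surjective.
   Context: A pre-meadow is a structure $(P,+,-,\cdot,0,1)$ satisfying: $(x+y)+z=x+(y+z)$, $x+y=y+x$, $x+0=x$, $x+(-x)=0\cdot x$, $(xy)z=x(yz)$, $xy=yx$, $1\cdot x=x$, $x(y+z)=xy+xz$, $-(-x)=x$, $0\cdot(x+y)=0\cdot x\cdot y$. For $z\in 0\cdot P$ put $P_z:=\{x\in P\mid 0\cdot x=z\}$. $P$ is a pre-meadow with $\mathbf{a}$ if there is a unique $z\in 0\cdot P$ with $|P_z|=1$, denoted $\mathbf{a}$, and $x+\mathbf{a}=\mathbf{a}$ for all $x\in P$. Each $P_{0\cdot z}$ is a commutative ring with the induced operations. The set $0\cdot P$ is ordered by $0\cdot z\le 0\cdot w$ iff $0\cdot z\cdot w=0\cdot z$. For $0\cdot z\le 0\cdot w$ the transition map $f_{0\cdot w,0\cdot z}:P_{0\cdot w}\to P_{0\cdot z}$ is the ring homomorphism $x\mapsto x+0\cdot z$. *)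

theory Defs
  imports Main
begin

definition pre_meadow ::
  "('a \<Rightarrow> 'a \<Rightarrow> 'a) \<Rightarrow> ('a \<Rightarrow> 'a) \<Rightarrow> ('a \<Rightarrow> 'a \<Rightarrow> 'a) \<Rightarrow> 'a \<Rightarrow> 'a \<Rightarrow> bool" where
  "pre_meadow add neg mul zero one \<longleftrightarrow>
     (\<forall>x y z. add (add x y) z = add x (add y z)) \<and>
     (\<forall>x y. add x y = add y x) \<and>
     (\<forall>x. add x zero = x) \<and>
     (\<forall>x. add x (neg x) = mul zero x) \<and>
     (\<forall>x y z. mul (mul x y) z = mul x (mul y z)) \<and>
     (\<forall>x y. mul x y = mul y x) \<and>
     (\<forall>x. mul one x = x) \<and>
     (\<forall>x y z. mul x (add y z) = add (mul x y) (mul x z)) \<and>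
     (\<forall>x. neg (neg x) = x) \<and>
     (\<forall>x y. mul zero (add x y) = mul (mul zero x) y)"

definition zeroP :: "('a \<Rightarrow> 'a \<Rightarrow> 'a) \<Rightarrow> 'a \<Rightarrow> 'a set" where
  "zeroP mul zero = range (mul zero)"

definition fibre :: "('a \<Rightarrow> 'a \<Rightarrow> 'a) \<Rightarrow> 'a \<Rightarrow> 'a \<Rightarrow> 'a set" where
  "fibre mul zero z = {x. mul zero x = z}"

definition pre_meadow_with_a ::
  "('a \<Rightarrow> 'a \<Rightarrow> 'a) \<Rightarrow> ('a \<Rightarrow> 'a) \<Rightarrow> ('a \<Rightarrow> 'a \<Rightarrow> 'a) \<Rightarrow> 'a \<Rightarrow> 'a \<Rightarrow> bool" where
  "pre_meadow_with_a add neg mul zero one \<longleftrightarrow>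
     pre_meadow add neg mul zero one \<and>
     (\<exists>!z. z \<in> zeroP mul zero \<and> card (fibre mul zero z) = 1) \<and>
     (\<forall>x. add x (THE z. z \<in> zeroP mul zero \<and> card (fibre mul zero z) = 1)
            = (THE z. z \<in> zeroP mul zero \<and> card (fibre mul zero z) = 1))"

text \<open>Order on 0\<cdot>P: zle mul zero z w means 0\<cdot>z \<le> 0\<cdot>w, i.e. 0\<cdot>z\<cdot>w = 0\<cdot>z.\<close>

definition zle :: "('a \<Rightarrow> 'a \<Rightarrow> 'a) \<Rightarrow> 'a \<Rightarrow> 'a \<Rightarrow> 'a \<Rightarrow> bool" where
  "zle mul zero z w \<longleftrightarrow> mul (mul zero z) w = mul zero z"

definition transition :: "('a \<Rightarrow> 'a \<Rightarrow> 'a) \<Rightarrow> 'a \<Rightarrow> 'a \<Rightarrow> 'a" where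
  "transition add u x = add x u"

definition transition_surj ::
  "('a \<Rightarrow> 'a \<Rightarrow> 'a) \<Rightarrow> ('a \<Rightarrow> 'a \<Rightarrow> 'a) \<Rightarrow> 'a \<Rightarrow> 'a \<Rightarrow> 'a \<Rightarrow> bool" where
  "transition_surj add mul zero v u \<longleftrightarrow>
     transition add u ` fibre mul zero v = fibre mul zero u"

end

theory Submission
  imports Defs
begin

theorem proposition3p6:
  fixes add :: "'a \<Rightarrow> 'a \<Rightarrow> 'a" and neg :: "'a \<Rightarrow> 'a"
    and mul :: "'a \<Rightarrow> 'a \<Rightarrow> 'a" and zero one :: 'a
  assumes "pre_meadow_with_a add neg mul zero one"
  shows "(\<forall>z w. zle mul zero z w \<longrightarrow>
            transition_surj add mul zero (mul zero w) (mul zero z))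
         \<longleftrightarrow> (\<forall>z. transition_surj add mul zero zero (mul zero z))"
proof -
  have pm: "pre_meadow add neg mul zero one" using assms unfolding pre_meadow_with_a_def by (rule conjunct1)
  have aA: "\<And>x y z. add (add x y) z = add x (add y z)"
   and aC: "\<And>x y. add x y = add y x"
   and a0: "\<And>x. add x zero = x"
   and mA: "\<And>x y z. mul (mul x y) z = mul x (mul y z)"
   and mC: "\<And>x y. mul x y = mul y x"
   and m1: "\<And>x. mul one x = x"
   and dist: "\<And>x y z. mul x (add y z) = add (mul x y) (mul x z)"
   and z0: "\<And>x y. mul zero (add x y) = mul (mul zero x) y"
    using pm unfolding pre_meadow_def by blast+
  have z1: "mul zero one = zero" by (subst mC) (rule m1)
  have zz: "mul zero zero = zero"
  proof -
    have "mul zero (add one zero) = mul (mul zero one) zero" by (rule z0)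
    thus ?thesis using a0 z1 by simp
  qed
  have xz: "\<And>x. add x (mul zero x) = x"
  proof -
    fix x
    have "mul x (add one zero) = add (mul x one) (mul x zero)" by (rule dist)
    thus "add x (mul zero x) = x" using a0 m1 mC[of x one] mC[of x zero] by simp
  qed
  show ?thesis
  proof
    assume H: "\<forall>z w. zle mul zero z w \<longrightarrow>
            transition_surj add mul zero (mul zero w) (mul zero z)"
    show "\<forall>z. transition_surj add mul zero zero (mul zero z)"
    proof
      fix z
      have "zle mul zero z one" unfolding zle_def using m1 mC[of "mul zero z" one] by simp
      with H have "transition_surj add mul zero (mul zero one) (mul zero z)" by simp
      thus "transition_surj add mul zero zero (mul zero z)" using z1 by simp
    qed
  next
    assume H: "\<forall>z. transition_surj add mul zero zero (mul zero z)"
    show "\<forall>z w. zle mul zero z w \<longrightarrow>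
            transition_surj add mul zero (mul zero w) (mul zero z)"
    proof (intro allI impI)
      fix z w
      assume le: "zle mul zero z w"
      hence le': "mul (mul zero z) w = mul zero z" unfolding zle_def .
      have key: "\<And>y. mul zero y = mul zero z \<Longrightarrow> add y (mul zero w) = y"
      proof -
        fix y assume yz: "mul zero y = mul zero z"
        have "add y (mul zero w) = add (add y (mul zero y)) (mul zero w)" using xz by simp
        also have "\<dots> = add y (mul zero (add y w))" using aA dist by simp
        also have "mul zero (add y w) = mul zero y" using z0 yz le' by simp
        finally show "add y (mul zero w) = y" using xz by simp
      qed
      show "transition_surj add mul zero (mul zero w) (mul zero z)"
        unfolding transition_surj_def
      proof
        show "transition add (mul zero z) ` fibre mul zero (mul zero w) \<subseteq> fibre mul zero (mul zero z)"
        proof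
          fix t assume "t \<in> transition add (mul zero z) ` fibre mul zero (mul zero w)"
          then obtain x where x': "x \<in> fibre mul zero (mul zero w)" and t': "t = transition add (mul zero z) x"
            by (rule imageE)
          have x: "mul zero x = mul zero w" using x' unfolding fibre_def by simp
          have t: "t = add x (mul zero z)" using t' unfolding transition_def .
          have "mul zero t = mul (mul zero w) (mul zero z)" using t x z0 by simp
          also have "\<dots> = mul (mul zero z) (mul zero w)" by (rule mC)
          also have "\<dots> = mul (mul zero z) (mul w zero)" by (simp add: mC[of zero w])
          also have "\<dots> = mul (mul (mul zero z) w) zero" by (simp add: mA)
          also have "\<dots> = mul (mul zero z) zero" using le' by simp
          also have "\<dots> = mul zero (mul zero z)" by (rule mC)
          also have "\<dots> = mul zero z" by (simp add: zz flip: mA)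
          finally show "t \<in> fibre mul zero (mul zero z)" unfolding fibre_def by simp
        qed
      next
        show "fibre mul zero (mul zero z) \<subseteq> transition add (mul zero z) ` fibre mul zero (mul zero w)"
        proof
          fix y assume "y \<in> fibre mul zero (mul zero z)"
          hence yz: "mul zero y = mul zero z" unfolding fibre_def by simp
          from H have S: "transition add (mul zero z) ` fibre mul zero zero = fibre mul zero (mul zero z)"
            unfolding transition_surj_def by simp
          have "y \<in> transition add (mul zero z) ` fibre mul zero zero"
            by (subst S) (simp add: fibre_def yz)
          then obtain x0 where x0': "x0 \<in> fibre mul zero zero" and y': "y = transition add (mul zero z) x0"
            by (rule imageE)
          have x0: "mul zero x0 = zero" using x0' unfolding fibre_def by simp
          have y: "y = add x0 (mul zero z)" using y' unfolding transition_def .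
          define x where "x = add x0 (mul zero w)"
          have "mul zero x = mul zero w"
            unfolding x_def by (simp add: z0 x0 zz flip: mA)
          moreover have "add x (mul zero z) = y"
          proof -
            have "add x (mul zero z) = add y (mul zero w)" unfolding x_def y by (simp add: aA aC[of "mul zero w"])
            thus ?thesis using key yz by simp
          qed
          ultimately show "y \<in> transition add (mul zero z) ` fibre mul zero (mul zero w)"
            unfolding fibre_def transition_def by (intro image_eqI[of _ _ x]) simp_all
        qed
      qed
    qed
  qed
qed

end
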